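(* Let $\varrho:\mathbb{R}\to\mathbb{R}$ be Lipschitz continuous but not affine-linear. Let $S=(N_0,\dots,N_{L-1},1)$ be a network architecture with $L\ge2$, $N_0=d$ and $N_1\ge3$, and let $\Omega\subset\mathbb{R}^d$ be bounded with nonempty interior. Then there is a sequence $(\Phi_n)_{n\in\mathbb{N}}\subset\mathcal{NN}(S)$ such that (1) $\mathrm{R}_\varrho^\Omega(\Phi_n)\to0$ uniformly on $\Omega$, and (2) $\mathrm{Lip}(\mathrm{R}_\varrho^\Omega(\Phi_n))\to\infty$ as $n\to\infty$. Moreover, if $(\Phi_n)_{n\in\mathbb{N}}\subset\mathcal{NN}(S)$ is any sequence with properties (1) and (2), then for every sequence $(\Psi_n)_{n\in\mathbb{N}}\subset\mathcal{NN}(S)$ with $\mathrm{R}_\varrho^\Omega(\Psi_n)=\mathrm{R}_\varrho^\Omega(\Phi_n)$ for all $n$, we have $\|\Psi_n\|_{\mathrm{scaling}}\to\infty$.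
   Context: A neural network with architecture $S=(N_0,\dots,N_L)$ is a family $\Phi=((A_\ell,b_\ell))_{\ell=1}^L$, $A_\ell\in\mathbb{R}^{N_\ell\times N_{\ell-1}}$, $b_\ell\in\mathbb{R}^{N_\ell}$; $\mathcal{NN}(S)$ is the set of these; $\|\Phi\|_{\mathrm{scaling}}=\max_\ell\|A_\ell\|_{\max}$ with $\|\cdot\|_{\max}$ the maximal absolute entry. $\mathrm{R}_\varrho^\Omega(\Phi):\Omega\to\mathbb{R}^{N_L}$, $x\mapsto x_L$, where $x_0=x$, $x_\ell=\varrho(A_\ell x_{\ell-1}+b_\ell)$ for $1\le\ell\le L-1$ (componentwise), $x_L=A_Lx_{L-1}+b_L$. $\mathrm{Lip}(f)$ denotes the smallest Lipschitz constant of $f$. *)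

theory Defs
  imports "HOL-Analysis.Analysis" "HOL-Library.Extended_Real"
begin

type_synonym mat = "nat \<Rightarrow> nat \<Rightarrow> real"
type_synonym vect = "nat \<Rightarrow> real"
type_synonym network = "(mat \<times> vect) list"

definition is_arch :: "nat list \<Rightarrow> bool" where
  "is_arch S \<longleftrightarrow> length S \<ge> 2 \<and> (\<forall>i<length S. S ! i \<ge> 1)"

text \<open>NN(S): layer l (0-based) is (A_{l+1}, b_{l+1}) with A an N_{l+1} x N_l matrix and b in R^{N_{l+1}};
  matrices/vectors are represented canonically as functions vanishing outside the index range.\<close>
definition NN :: "nat list \<Rightarrow> network set" where
  "NN S = {\<Phi>. length \<Phi> = length S - 1 \<and>
     (\<forall>l<length \<Phi>. (\<forall>i j. (S ! Suc l \<le> i \<or> S ! l \<le> j) \<longrightarrow> fst (\<Phi> ! l) i j = 0)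
                  \<and> (\<forall>i. S ! Suc l \<le> i \<longrightarrow> snd (\<Phi> ! l) i = 0))}"

definition max_norm :: "mat \<Rightarrow> nat \<Rightarrow> nat \<Rightarrow> real" where
  "max_norm A m n = Max ({\<bar>A i j\<bar> | i j. i < m \<and> j < n} \<union> {0})"

definition scaling :: "nat list \<Rightarrow> network \<Rightarrow> real" where
  "scaling S \<Phi> = Max ({max_norm (fst (\<Phi> ! l)) (S ! Suc l) (S ! l) | l. l < length \<Phi>} \<union> {0})"

definition aff :: "mat \<times> vect \<Rightarrow> nat \<Rightarrow> vect \<Rightarrow> vect" where
  "aff Ab n x = (\<lambda>i. (\<Sum>j<n. fst Ab i j * x j) + snd Ab i)"

primrec act :: "(real \<Rightarrow> real) \<Rightarrow> nat list \<Rightarrow> network \<Rightarrow> vect \<Rightarrow> nat \<Rightarrow> vect" where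
  "act \<rho> S \<Phi> x 0 = x"
| "act \<rho> S \<Phi> x (Suc l) = (\<lambda>i. \<rho> (aff (\<Phi> ! l) (S ! l) (act \<rho> S \<Phi> x l) i))"

definition coord_enum :: "nat \<Rightarrow> 'd::finite" where
  "coord_enum = (SOME f. bij_betw f {..<CARD('d)} (UNIV :: 'd set))"

definition vec_to_seq :: "real^'d::finite \<Rightarrow> vect" where
  "vec_to_seq x = (\<lambda>j. if j < CARD('d) then x $ coord_enum j else 0)"

definition realize :: "(real \<Rightarrow> real) \<Rightarrow> nat list \<Rightarrow> network \<Rightarrow> real^'d::finite \<Rightarrow> real" where
  "realize \<rho> S \<Phi> x =
     (let L = length \<Phi> in aff (\<Phi> ! (L - 1)) (S ! (L - 1)) (act \<rho> S \<Phi> (vec_to_seq x) (L - 1)) 0)"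

text \<open>smallest Lipschitz constant on U (\<infinity> if not Lipschitz)\<close>
definition lip_const :: "'a::metric_space set \<Rightarrow> ('a \<Rightarrow> 'b::metric_space) \<Rightarrow> ereal" where
  "lip_const U f = Inf {ereal C | C. C-lipschitz_on U f}"

end

theory Submission
  imports Defs
begin


lemma max_norm_ge:
  assumes "i < m" "j < n" shows "\<bar>A i j\<bar> \<le> max_norm A m n"
proof -
  have fin: "finite ({\<bar>A i j\<bar> | i j. i < m \<and> j < n} \<union> {0})"
  proof -
    have "{\<bar>A i j\<bar> | i j. i < m \<and> j < n} = (\<lambda>(i,j). \<bar>A i j\<bar>) ` ({..<m} \<times> {..<n})" by auto
    then show ?thesis by simp
  qed
  show ?thesis unfolding max_norm_def by (rule Max_ge[OF fin]) (use assms in blast)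
qed

lemma max_norm_nonneg: "0 \<le> max_norm A m n"
proof -
  have "finite ({\<bar>A i j\<bar> | i j. i < m \<and> j < n} \<union> {0})"
  proof -
    have "{\<bar>A i j\<bar> | i j. i < m \<and> j < n} = (\<lambda>(i,j). \<bar>A i j\<bar>) ` ({..<m} \<times> {..<n})" by auto
    then show ?thesis by simp
  qed
  then show ?thesis unfolding max_norm_def by (rule Max_ge) simp
qed

lemma scaling_fin: "finite ({max_norm (fst (\<Phi> ! l)) (S ! Suc l) (S ! l) | l. l < length \<Phi>} \<union> {0})"
proof -
  have "{max_norm (fst (\<Phi> ! l)) (S ! Suc l) (S ! l) | l. l < length \<Phi>}
     = (\<lambda>l. max_norm (fst (\<Phi> ! l)) (S ! Suc l) (S ! l)) ` {..<length \<Phi>}" by auto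
  then show ?thesis by simp
qed

lemma scaling_nonneg: "0 \<le> scaling S \<Phi>"
  unfolding scaling_def by (rule Max_ge[OF scaling_fin]) simp

lemma entry_le_scaling:
  assumes "\<Phi> \<in> NN S" "l < length \<Phi>" "j < S ! l"
  shows "\<bar>fst (\<Phi> ! l) i j\<bar> \<le> scaling S \<Phi>"
proof (cases "i < S ! Suc l")
  case True
  have "\<bar>fst (\<Phi> ! l) i j\<bar> \<le> max_norm (fst (\<Phi> ! l)) (S ! Suc l) (S ! l)"
    by (rule max_norm_ge) (use True assms in auto)
  also have "\<dots> \<le> scaling S \<Phi>" unfolding scaling_def
    by (rule Max_ge[OF scaling_fin]) (use assms in blast)
  finally show ?thesis .
next
  case False
  then have "fst (\<Phi> ! l) i j = 0" using assms unfolding NN_def by auto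
  then show ?thesis using scaling_nonneg by simp
qed

lemma act_lip:
  assumes "C-lipschitz_on UNIV \<rho>" "B \<ge> 0"
    and ent: "\<And>l i j. l < length \<Psi> \<Longrightarrow> j < S ! l \<Longrightarrow> \<bar>fst (\<Psi> ! l) i j\<bar> \<le> B"
    and uv: "\<And>j. \<bar>u j - v j\<bar> \<le> D"
  shows "l \<le> length \<Psi> \<Longrightarrow> \<bar>act \<rho> S \<Psi> u l i - act \<rho> S \<Psi> v l i\<bar> \<le> (\<Prod>m<l. C * real (S ! m) * B) * D"
proof (induction l arbitrary: i)
  case 0
  then show ?case using uv by simp
next
  case (Suc l)
  let ?K = "(\<Prod>m<l. C * real (S ! m) * B)"
  have C0: "C \<ge> 0" using assms(1) unfolding lipschitz_on_def by auto
  have IH: "\<And>j. \<bar>act \<rho> S \<Psi> u l j - act \<rho> S \<Psi> v l j\<bar> \<le> ?K * D" using Suc by simp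
  have "\<bar>aff (\<Psi> ! l) (S ! l) (act \<rho> S \<Psi> u l) i - aff (\<Psi> ! l) (S ! l) (act \<rho> S \<Psi> v l) i\<bar>
      = \<bar>\<Sum>j<S ! l. fst (\<Psi> ! l) i j * (act \<rho> S \<Psi> u l j - act \<rho> S \<Psi> v l j)\<bar>"
    unfolding aff_def by (simp add: sum_subtractf[symmetric] algebra_simps)
  also have "\<dots> \<le> (\<Sum>j<S ! l. \<bar>fst (\<Psi> ! l) i j * (act \<rho> S \<Psi> u l j - act \<rho> S \<Psi> v l j)\<bar>)"
    by (rule sum_abs)
  also have "\<dots> \<le> (\<Sum>j<S ! l. B * (?K * D))"
  proof (rule sum_mono)
    fix j assume "j \<in> {..<S ! l}"
    then have "\<bar>fst (\<Psi> ! l) i j\<bar> \<le> B" using ent Suc.prems by simp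
    then show "\<bar>fst (\<Psi> ! l) i j * (act \<rho> S \<Psi> u l j - act \<rho> S \<Psi> v l j)\<bar> \<le> B * (?K * D)"
      unfolding abs_mult by (rule mult_mono) (use IH assms(2) in auto)
  qed
  finally have A: "\<bar>aff (\<Psi> ! l) (S ! l) (act \<rho> S \<Psi> u l) i - aff (\<Psi> ! l) (S ! l) (act \<rho> S \<Psi> v l) i\<bar>
      \<le> real (S ! l) * B * (?K * D)" by simp
  have "\<bar>act \<rho> S \<Psi> u (Suc l) i - act \<rho> S \<Psi> v (Suc l) i\<bar>
     \<le> C * \<bar>aff (\<Psi> ! l) (S ! l) (act \<rho> S \<Psi> u l) i - aff (\<Psi> ! l) (S ! l) (act \<rho> S \<Psi> v l) i\<bar>"
    using assms(1) unfolding lipschitz_on_def by (simp add: dist_real_def)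
  also have "\<dots> \<le> C * (real (S ! l) * B * (?K * D))" by (rule mult_left_mono[OF A C0])
  finally show ?case by (simp add: algebra_simps)
qed

lemma vts_diff: "\<bar>vec_to_seq x j - vec_to_seq y j\<bar> \<le> dist x y"
  unfolding vec_to_seq_def dist_norm
  using component_le_norm_cart[of "x - y"] by auto

lemma realize_lip:
  assumes "C-lipschitz_on UNIV \<rho>" "\<Psi> \<in> NN S" "length S \<ge> 2" "scaling S \<Psi> \<le> B"
  shows "(real (S ! (length S - 2)) * B * (\<Prod>m<length S - 2. C * real (S ! m) * B))-lipschitz_on UNIV
     (realize \<rho> S \<Psi> :: real^'d::finite \<Rightarrow> real)"
proof -
  have B0: "B \<ge> 0" using scaling_nonneg[of S \<Psi>] assms by linarith
  have C0: "C \<ge> 0" using assms(1) unfolding lipschitz_on_def by auto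
  have len: "length \<Psi> = length S - 1" using assms(2) unfolding NN_def by auto
  let ?L = "length S - 2"
  have L1: "length \<Psi> - 1 = ?L" using len by simp
  have ent: "\<And>l i j. l < length \<Psi> \<Longrightarrow> j < S ! l \<Longrightarrow> \<bar>fst (\<Psi> ! l) i j\<bar> \<le> B"
    using entry_le_scaling[OF assms(2)] assms(4) by (meson order_trans)
  let ?K = "(\<Prod>m<?L. C * real (S ! m) * B)"
  have K0: "?K \<ge> 0" by (rule prod_nonneg) (use B0 C0 in auto)
  show ?thesis unfolding lipschitz_on_def
  proof (intro conjI ballI)
    show "0 \<le> real (S ! ?L) * B * ?K" using B0 K0 by simp
    fix x y :: "real^'d" 
    have IH: "\<And>j. \<bar>act \<rho> S \<Psi> (vec_to_seq x) ?L j - act \<rho> S \<Psi> (vec_to_seq y) ?L j\<bar> \<le> ?K * dist x y"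
      by (rule act_lip[OF assms(1) B0 ent vts_diff]) (use len assms(3) in auto)
    have l: "?L < length \<Psi>" using len assms(3) by simp
    have "dist (realize \<rho> S \<Psi> x) (realize \<rho> S \<Psi> y)
       = \<bar>\<Sum>j<S ! ?L. fst (\<Psi> ! ?L) 0 j * (act \<rho> S \<Psi> (vec_to_seq x) ?L j - act \<rho> S \<Psi> (vec_to_seq y) ?L j)\<bar>"
      unfolding realize_def Let_def L1 aff_def dist_real_def by (simp add: sum_subtractf[symmetric] algebra_simps)
    also have "\<dots> \<le> (\<Sum>j<S ! ?L. \<bar>fst (\<Psi> ! ?L) 0 j * (act \<rho> S \<Psi> (vec_to_seq x) ?L j - act \<rho> S \<Psi> (vec_to_seq y) ?L j)\<bar>)"
      by (rule sum_abs)
    also have "\<dots> \<le> (\<Sum>j<S ! ?L. B * (?K * dist x y))"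
    proof (rule sum_mono)
      fix j assume "j \<in> {..<S ! ?L}"
      then have "\<bar>fst (\<Psi> ! ?L) 0 j\<bar> \<le> B" using ent l by simp
      then show "\<bar>fst (\<Psi> ! ?L) 0 j * (act \<rho> S \<Psi> (vec_to_seq x) ?L j - act \<rho> S \<Psi> (vec_to_seq y) ?L j)\<bar> \<le> B * (?K * dist x y)"
        unfolding abs_mult by (rule mult_mono) (use IH B0 in auto)
    qed
    finally show "dist (realize \<rho> S \<Psi> x) (realize \<rho> S \<Psi> y) \<le> real (S ! ?L) * B * ?K * dist x y"
      by (simp add: algebra_simps)
  qed
qed

lemma lip_const_le: "K-lipschitz_on U f \<Longrightarrow> lip_const U f \<le> ereal K"
  unfolding lip_const_def by (rule Inf_lower) blast

lemma lip_const_ge: "(\<And>C. C-lipschitz_on U f \<Longrightarrow> r \<le> C) \<Longrightarrow> ereal r \<le> lip_const U f"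
  unfolding lip_const_def by (rule Inf_greatest) auto


lemma nonaffine_witness:
  fixes \<rho> :: "real \<Rightarrow> real"
  assumes lip: "C-lipschitz_on UNIV \<rho>" and na: "\<not> (\<exists>a c. \<forall>t. \<rho> t = a * t + c)"
  shows "\<exists>c s0 s1. \<rho> (s0 + c) - \<rho> s0 \<noteq> \<rho> (s1 + c) - \<rho> s1"
proof (rule ccontr)
  assume "\<not> ?thesis"
  then have H: "\<And>c s. \<rho> (s + c) - \<rho> s = \<rho> c - \<rho> 0" by (metis add_0)
  define a where "a = \<rho> 1 - \<rho> 0"
  define g where "g t = \<rho> t - \<rho> 0 - a * t" for t
  have add: "g (s + c) = g s + g c" for s c
    unfolding g_def using H[of s c] by (simp add: algebra_simps)
  have g0: "g 0 = 0" unfolding g_def by simp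
  have g1: "g 1 = 0" unfolding g_def a_def by simp
  have C0: "C \<ge> 0" using lip unfolding lipschitz_on_def by auto
  have glip: "\<bar>g x - g y\<bar> \<le> (C + \<bar>a\<bar>) * \<bar>x - y\<bar>" for x y
  proof -
    have "\<bar>\<rho> x - \<rho> y\<bar> \<le> C * \<bar>x - y\<bar>" using lip unfolding lipschitz_on_def dist_real_def by auto
    moreover have "\<bar>a * x - a * y\<bar> = \<bar>a\<bar> * \<bar>x - y\<bar>" by (simp add: abs_mult[symmetric] algebra_simps)
    moreover have "g x - g y = (\<rho> x - \<rho> y) - (a * x - a * y)" unfolding g_def by simp
    ultimately show ?thesis by (smt (verit) distrib_right)
  qed
  have gm: "g (real m * t) = real m * g t" for m t
    by (induction m) (simp_all add: g0 add distrib_right)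
  have gneg: "g (- x) = - g x" for x using add[of x "-x"] g0 by simp
  have gint: "g (of_int k) = 0" for k
  proof (cases "k \<ge> 0")
    case True
    then obtain m where "k = int m" by (metis nonneg_eq_int)
    then show ?thesis using gm[of m 1] g1 by simp
  next
    case False
    define m where "m = nat (-k)"
    have "k = - int m" using False unfolding m_def by simp
    then show ?thesis using gm[of m 1] g1 gneg[of "real m"] by simp
  qed
  have bound: "real m * \<bar>g t\<bar> \<le> C + \<bar>a\<bar>" for m t
  proof -
    define k where "k = \<lfloor>real m * t\<rfloor>"
    have "g (real m * t) = g (real m * t - of_int k) + g (of_int k)" using add by (metis diff_add_cancel)
    then have "real m * g t = g (real m * t - of_int k)" using gm gint by simp
    moreover have "\<bar>g (real m * t - of_int k) - g 0\<bar> \<le> (C + \<bar>a\<bar>) * \<bar>real m * t - of_int k - 0\<bar>" by (rule glip)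
    moreover have "\<bar>real m * t - of_int k\<bar> \<le> 1" 
      using floor_correct[of "real m * t"] unfolding k_def by linarith
    moreover have "(C + \<bar>a\<bar>) * \<bar>real m * t - of_int k\<bar> \<le> (C + \<bar>a\<bar>) * 1"
      by (rule mult_left_mono) (use C0 \<open>\<bar>real m * t - of_int k\<bar> \<le> 1\<close> in auto)
    ultimately have "\<bar>real m * g t\<bar> \<le> (C + \<bar>a\<bar>) * 1" using g0 by (metis diff_zero order_trans)
    then show ?thesis by (simp add: abs_mult)
  qed
  have gz: "g t = 0" for t
  proof (rule ccontr)
    assume "g t \<noteq> 0"
    then have pos: "\<bar>g t\<bar> > 0" by simp
    obtain m where m: "real m > (C + \<bar>a\<bar>) / \<bar>g t\<bar>" using reals_Archimedean2 by blast
    then have "real m * \<bar>g t\<bar> > C + \<bar>a\<bar>" using pos by (simp add: divide_less_eq)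
    then show False using bound[of m t] by simp
  qed
  have "\<rho> t = a * t + \<rho> 0" for t using gz[of t] unfolding g_def by linarith
  then have "\<forall>t. \<rho> t = a * t + \<rho> 0" by blast
  then show False using na by blast
qed


lemma sum2:
  fixes v :: "nat \<Rightarrow> real"
  assumes "N \<ge> 1" "l = 1 \<longrightarrow> N \<ge> 2"
  shows "(\<Sum>j<N. (if j = 0 then a else if j = 1 \<and> l = 1 then e else 0) * v j)
         = a * v 0 + (if l = 1 then e * v 1 else 0)"
proof -
  have "(\<Sum>j<N. (if j = 0 then a else if j = 1 \<and> l = 1 then e else 0) * v j)
     = (\<Sum>j<N. (if j = 0 then a * v j else 0) + (if j = 1 then (if l = 1 then e * v j else 0) else 0))"
    by (rule sum.cong) auto
  also have "\<dots> = a * v 0 + (if l = 1 then e * v 1 else 0)"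
    unfolding sum.distrib using assms by (auto simp add: sum.delta)
  finally show ?thesis .
qed

lemma sum1:
  fixes u :: "nat \<Rightarrow> real"
  assumes "N \<ge> 1"
  shows "(\<Sum>j<N. (if i < 2 \<and> j = 0 then w else 0) * u j) = (if i < 2 then w * u 0 else 0)"
proof -
  have "(\<Sum>j<N. (if i < 2 \<and> j = 0 then w else 0) * u j) = (\<Sum>j<N. if j = 0 then (if i < 2 then w * u j else 0) else 0)"
    by (rule sum.cong) auto
  also have "\<dots> = (if i < 2 then w * u 0 else 0)" using assms by (simp add: sum.delta)
  finally show ?thesis .
qed

lemma construction:
  fixes \<rho> :: "real \<Rightarrow> real" and S :: "nat list" and \<Omega> :: "(real^'d::finite) set"
  assumes lip: "C-lipschitz_on UNIV \<rho>"
    and na: "\<not> (\<exists>a c. \<forall>t. \<rho> t = a * t + c)"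
    and arch: "is_arch S" and len3: "length S \<ge> 3"
    and S0: "S ! 0 = CARD('d)" and S1: "S ! 1 \<ge> 3"
    and int: "interior \<Omega> \<noteq> {}"
  shows "\<exists>\<Phi> :: nat \<Rightarrow> network. (\<forall>n. \<Phi> n \<in> NN S)
            \<and> uniform_limit \<Omega> (\<lambda>n. realize \<rho> S (\<Phi> n)) (\<lambda>x. 0) sequentially
            \<and> (\<lambda>n. lip_const \<Omega> (realize \<rho> S (\<Phi> n))) \<longlonglongrightarrow> \<infinity>"
proof -
  have C0: "C \<ge> 0" using lip unfolding lipschitz_on_def by auto
  have lipr: "\<bar>\<rho> x - \<rho> y\<bar> \<le> C * \<bar>x - y\<bar>" for x y
    using lip unfolding lipschitz_on_def dist_real_def by auto
  obtain c s0 s1 where hs: "\<rho> (s0 + c) - \<rho> s0 \<noteq> \<rho> (s1 + c) - \<rho> s1"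
    using nonaffine_witness[OF lip na] by blast
  define h where "h t = \<rho> (t + c) - \<rho> t" for t
  have hs': "h s0 \<noteq> h s1" using hs unfolding h_def by simp
  obtain p q where pq: "\<rho> p \<noteq> \<rho> q"
  proof -
    have "\<exists>p q. \<rho> p \<noteq> \<rho> q"
    proof (rule ccontr)
      assume "\<not> ?thesis"
      then have "\<forall>t. \<rho> t = 0 * t + \<rho> 0" by auto
      then show False using na by blast
    qed
    then show ?thesis using that by blast
  qed
  define \<alpha>1 where "\<alpha>1 = (q - p) / (h s1 - h s0)"
  define \<beta>1 where "\<beta>1 = p - \<alpha>1 * h s0"
  define \<alpha>2 where "\<alpha>2 = (q - p) / (\<rho> q - \<rho> p)"
  define \<beta>2 where "\<beta>2 = p - \<alpha>2 * \<rho> p"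
  define fi :: "nat \<Rightarrow> real \<Rightarrow> real" where
    "fi = rec_nat (\<lambda>t. \<alpha>1 * h t + \<beta>1) (\<lambda>m f t. \<alpha>2 * \<rho> (f t) + \<beta>2)"
  have fi0: "fi 0 t = \<alpha>1 * h t + \<beta>1" for t unfolding fi_def by simp
  have fiS: "fi (Suc m) t = \<alpha>2 * \<rho> (fi m t) + \<beta>2" for m t unfolding fi_def by simp
  have fis: "fi m s0 = p \<and> fi m s1 = q" for m
  proof (induction m)
    case 0
    have "h s1 - h s0 \<noteq> 0" using hs' by simp
    then have e: "\<alpha>1 * (h s1 - h s0) = q - p" unfolding \<alpha>1_def by simp
    have "fi 0 s1 = \<alpha>1 * (h s1 - h s0) + p" unfolding fi0 \<beta>1_def by (simp add: algebra_simps)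
    then show ?case using e unfolding fi0 \<beta>1_def by simp
  next
    case (Suc m)
    have "\<rho> q - \<rho> p \<noteq> 0" using pq by simp
    then have e: "\<alpha>2 * (\<rho> q - \<rho> p) = q - p" unfolding \<alpha>2_def by simp
    have "fi (Suc m) s1 = \<alpha>2 * (\<rho> q - \<rho> p) + p" unfolding fiS \<beta>2_def using Suc by (simp add: algebra_simps)
    then show ?case using e Suc unfolding fiS \<beta>2_def by simp
  qed
  have hb: "\<bar>h t\<bar> \<le> C * \<bar>c\<bar>" for t unfolding h_def using lipr[of "t + c" t] by simp
  have rb: "\<bar>\<rho> y\<bar> \<le> \<bar>\<rho> 0\<bar> + C * M" if "\<bar>y\<bar> \<le> M" for y M
  proof -
    have "\<bar>\<rho> y - \<rho> 0\<bar> \<le> C * \<bar>y\<bar>" using lipr[of y 0] by simp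
    also have "\<dots> \<le> C * M" using that C0 by (simp add: mult_left_mono)
    finally show ?thesis by linarith
  qed
  have fib: "\<exists>M. \<forall>t. \<bar>fi m t\<bar> \<le> M" for m
  proof (induction m)
    case 0
    have "\<bar>fi 0 t\<bar> \<le> \<bar>\<alpha>1\<bar> * (C * \<bar>c\<bar>) + \<bar>\<beta>1\<bar>" for t
    proof -
      have "\<bar>\<alpha>1 * h t\<bar> \<le> \<bar>\<alpha>1\<bar> * (C * \<bar>c\<bar>)" unfolding abs_mult by (rule mult_left_mono[OF hb]) simp
      then show ?thesis unfolding fi0 by linarith
    qed
    then show ?case by blast
  next
    case (Suc m)
    then obtain M where M: "\<And>t. \<bar>fi m t\<bar> \<le> M" by blast
    have "\<bar>fi (Suc m) t\<bar> \<le> \<bar>\<alpha>2\<bar> * (\<bar>\<rho> 0\<bar> + C * M) + \<bar>\<beta>2\<bar>" for t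
    proof -
      have "\<bar>\<alpha>2 * \<rho> (fi m t)\<bar> \<le> \<bar>\<alpha>2\<bar> * (\<bar>\<rho> 0\<bar> + C * M)" unfolding abs_mult
        by (rule mult_left_mono[OF rb[OF M]]) simp
      then show ?thesis unfolding fiS by linarith
    qed
    then show ?case by blast
  qed
  define L where "L = length S - 1"
  have L2: "L \<ge> 2" using len3 unfolding L_def by simp
  define P where "P t = (if L = 2 then h t else \<rho> (fi (L - 3) t))" for t
  have Ps: "P s0 \<noteq> P s1" unfolding P_def using fis[of "L - 3"] hs' pq by auto
  obtain M where M: "\<And>t. \<bar>P t\<bar> \<le> M"
  proof -
    obtain M1 where M1: "\<And>t. \<bar>fi (L - 3) t\<bar> \<le> M1" using fib by blast
    have "\<bar>P t\<bar> \<le> C * \<bar>c\<bar> + (\<bar>\<rho> 0\<bar> + C * M1)" for t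
      unfolding P_def using hb[of t] rb[OF M1[of t]] C0 by (auto simp: add_increasing add_increasing2)
    then show ?thesis using that by blast
  qed
  have M0: "M \<ge> 0" using M[of 0] by simp
  obtain x0 \<delta> where \<delta>: "\<delta> > 0" "ball x0 \<delta> \<subseteq> \<Omega>"
    using int by (metis all_not_in_conv mem_interior)
  define k :: 'd where "k = coord_enum 0"
  have Sge1: "\<And>i. i < length S \<Longrightarrow> S ! i \<ge> 1" using arch unfolding is_arch_def by auto
  define w where "w n = (real (Suc n))\<^sup>2" for n
  define b where "b n = s0 - w n * x0 $ k" for n
  define co where "co n l = (if l = L - 1 then 1 / real (Suc n) else if l = 1 then \<alpha>1 else \<alpha>2)" for n l
  define bi where "bi l = (if l = L - 1 then 0 else if l = 1 then \<beta>1 else \<beta>2)" for l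
  define lay :: "nat \<Rightarrow> nat \<Rightarrow> mat \<times> vect" where "lay n l =
    (if l = 0 then ((\<lambda>i j. if i < 2 \<and> j = 0 then w n else 0),
                    (\<lambda>i. if i = 0 then b n + c else if i = 1 then b n else 0))
     else ((\<lambda>i j. if i = 0 then (if j = 0 then co n l else if j = 1 \<and> l = 1 then - co n l else 0) else 0),
           (\<lambda>i. if i = 0 then bi l else 0)))" for n l
  define \<Phi> where "\<Phi> n = map (lay n) [0..<L]" for n
  have \<Phi>nth: "l < L \<Longrightarrow> \<Phi> n ! l = lay n l" for n l unfolding \<Phi>_def by simp
  have \<Phi>len: "length (\<Phi> n) = L" for n unfolding \<Phi>_def by simp
  have NN: "\<Phi> n \<in> NN S" for n
    unfolding NN_def
  proof (intro CollectI conjI allI impI)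
    show "length (\<Phi> n) = length S - 1" using \<Phi>len L_def by simp
  next
    fix l i j assume l: "l < length (\<Phi> n)" and ij: "S ! Suc l \<le> i \<or> S ! l \<le> j"
    have "S ! Suc l \<ge> 1" "S ! l \<ge> 1" using Sge1 l \<Phi>len L_def by auto
    moreover have "l = 0 \<Longrightarrow> S ! Suc l \<ge> 3" using S1 by simp
    moreover have "l = 1 \<Longrightarrow> S ! l \<ge> 3" using S1 by simp
    ultimately show "fst (\<Phi> n ! l) i j = 0" using l ij \<Phi>len unfolding \<Phi>nth[OF l[unfolded \<Phi>len]] lay_def
      by (auto simp: S0)
  next
    fix l i assume l: "l < length (\<Phi> n)" and i: "S ! Suc l \<le> i"
    have "S ! Suc l \<ge> 1" using Sge1 l \<Phi>len L_def by auto
    moreover have "l = 0 \<Longrightarrow> S ! Suc l \<ge> 3" using S1 by simp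
    ultimately show "snd (\<Phi> n ! l) i = 0" using l i \<Phi>len unfolding \<Phi>nth[OF l[unfolded \<Phi>len]] lay_def
      by auto
  qed
  have affl: "aff (\<Phi> n ! l) (S ! l) v 0 = co n l * v 0 + (if l = 1 then - co n l * v 1 else 0) + bi l"
    if "1 \<le> l" "l < L" for n l v
  proof -
    have "S ! l \<ge> 1" using Sge1 that L_def by auto
    moreover have "l = 1 \<longrightarrow> S ! l \<ge> 2" using S1 by auto
    ultimately show ?thesis unfolding aff_def \<Phi>nth[OF that(2)] lay_def using that
      by (simp add: sum2)
  qed
  have aff0: "aff (\<Phi> n ! 0) (S ! 0) u i = (if i < 2 then w n * u 0 else 0) + (if i = 0 then b n + c else if i = 1 then b n else 0)"
    for n u i
  proof -
    have "S ! 0 \<ge> 1" using Sge1[of 0] len3 by force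
    then show ?thesis unfolding aff_def \<Phi>nth[OF order.strict_trans2[OF _ L2, of 0, simplified]] lay_def
      by (simp add: sum1)
  qed
  define t where "t n u = w n * u 0 + b n" for n and u :: vect
  have act10: "act \<rho> S (\<Phi> n) u 1 0 = \<rho> (t n u + c)" for n u
    using aff0[of n u 0] unfolding t_def by (simp add: algebra_simps)
  have act11: "act \<rho> S (\<Phi> n) u 1 1 = \<rho> (t n u)" for n u
    using aff0[of n u 1] unfolding t_def by (simp add: algebra_simps)
  have claimA: "Suc m \<le> L - 2 \<Longrightarrow> aff (\<Phi> n ! Suc m) (S ! Suc m) (act \<rho> S (\<Phi> n) u (Suc m)) 0 = fi m (t n u)" for m n u
  proof (induction m)
    case 0
    have "co n 1 = \<alpha>1" "bi 1 = \<beta>1" using 0 L2 unfolding co_def bi_def by auto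
    then have e: "aff (\<Phi> n ! 1) (S ! 1) (act \<rho> S (\<Phi> n) u 1) 0 = \<alpha>1 * act \<rho> S (\<Phi> n) u 1 0 - \<alpha>1 * act \<rho> S (\<Phi> n) u 1 1 + \<beta>1"
      using affl[of 1 n "act \<rho> S (\<Phi> n) u 1"] 0 L2 by (simp del: act.simps)
    show ?case using e unfolding act10 act11 fi0 h_def One_nat_def[symmetric]
      by (simp del: act.simps add: algebra_simps)
  next
    case (Suc m)
    have "co n (Suc (Suc m)) = \<alpha>2" "bi (Suc (Suc m)) = \<beta>2" using Suc.prems L2 unfolding co_def bi_def by auto
    then show ?case using affl[of "Suc (Suc m)" n] Suc L2 unfolding fiS
      by simp
  qed
  have real_eq: "realize \<rho> S (\<Phi> n) x = P (t n (vec_to_seq x)) / real (Suc n)" for n x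
  proof -
    have r: "realize \<rho> S (\<Phi> n) x = aff (\<Phi> n ! (L - 1)) (S ! (L - 1)) (act \<rho> S (\<Phi> n) (vec_to_seq x) (L - 1)) 0"
      unfolding realize_def Let_def \<Phi>len by simp
    have co: "co n (L - 1) = 1 / real (Suc n)" "bi (L - 1) = 0" unfolding co_def bi_def by auto
    show ?thesis
    proof (cases "L = 2")
      case True
      then have L1: "L - 1 = 1" by simp
      let ?v = "act \<rho> S (\<Phi> n) (vec_to_seq x) 1"
      have e: "realize \<rho> S (\<Phi> n) x = co n 1 * ?v 0 - co n 1 * ?v 1 + bi 1"
        using r affl[of 1 n ?v] L2 unfolding L1 by (simp del: act.simps)
      have co1: "co n 1 = 1 / real (Suc n)" and bi1: "bi 1 = 0" using co unfolding L1 by auto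
      show ?thesis unfolding e co1 bi1 act10 act11 P_def h_def using True
        by (simp del: act.simps add: diff_divide_distrib)
    next
      case False
      then have L3: "L \<ge> 3" using L2 by simp
      have "L - 1 = Suc (Suc (L - 3))" using L3 by simp
      then have "act \<rho> S (\<Phi> n) (vec_to_seq x) (L - 1) 0 = \<rho> (fi (L - 3) (t n (vec_to_seq x)))"
        using claimA[of "L - 3" n "vec_to_seq x"] L3 by simp
      moreover have "L - 1 \<noteq> 1" "1 \<le> L - 1" "L - 1 < L" using L3 by auto
      ultimately have e: "realize \<rho> S (\<Phi> n) x = co n (L - 1) * \<rho> (fi (L - 3) (t n (vec_to_seq x))) + bi (L - 1)"
        using r affl[of "L - 1" n "act \<rho> S (\<Phi> n) (vec_to_seq x) (L - 1)"] by (simp del: act.simps)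
      show ?thesis unfolding e co P_def using False by simp
    qed
  qed
  have v0: "vec_to_seq z 0 = z $ k" for z :: "real^'d"
    unfolding vec_to_seq_def k_def using finite_UNIV_card_ge_0[where ?'a='d] by simp
  have unif: "uniform_limit \<Omega> (\<lambda>n. realize \<rho> S (\<Phi> n)) (\<lambda>x. 0) sequentially"
    unfolding uniform_limit_iff
  proof (intro allI impI)
    fix e :: real assume e: "e > 0"
    obtain N where N: "real N > M / e" using reals_Archimedean2 by blast
    show "\<forall>\<^sub>F n in sequentially. \<forall>x\<in>\<Omega>. dist (realize \<rho> S (\<Phi> n) x) 0 < e"
      unfolding eventually_sequentially
    proof (intro exI allI impI ballI)
      fix n x assume n: "N \<le> n"
      have "M / e < real (Suc n)" using N n by simp
      then have Me: "M < e * real (Suc n)" using e by (simp add: divide_less_eq mult.commute)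
      have "dist (realize \<rho> S (\<Phi> n) x) 0 = \<bar>P (t n (vec_to_seq x))\<bar> / real (Suc n)"
        unfolding real_eq by simp
      also have "\<dots> \<le> M / real (Suc n)" by (rule divide_right_mono[OF M]) simp
      also have "\<dots> < e" using Me by (simp add: divide_less_eq)
      finally show "dist (realize \<rho> S (\<Phi> n) x) 0 < e" .
    qed
  qed
  define \<Delta> where "\<Delta> = s1 - s0"
  define D where "D = \<bar>P s1 - P s0\<bar>"
  have D0: "D > 0" using Ps unfolding D_def by simp
  have \<Delta>0: "\<bar>\<Delta>\<bar> > 0" using Ps unfolding \<Delta>_def by auto
  have lipinf: "(\<lambda>n. lip_const \<Omega> (realize \<rho> S (\<Phi> n))) \<longlonglongrightarrow> \<infinity>"
    unfolding tendsto_PInfty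
  proof
    fix r :: real
    obtain N where N: "real N > max (r * \<bar>\<Delta>\<bar> / D) (\<bar>\<Delta>\<bar> / \<delta>)" using reals_Archimedean2 by blast
    show "\<forall>\<^sub>F n in sequentially. ereal r < lip_const \<Omega> (realize \<rho> S (\<Phi> n))"
      unfolding eventually_sequentially
    proof (intro exI allI impI)
      fix n assume n: "N \<le> n"
      define n' where "n' = real (Suc n)"
      have n'1: "n' \<ge> 1" unfolding n'_def by simp
      have n'a: "n' > r * \<bar>\<Delta>\<bar> / D" "n' > \<bar>\<Delta>\<bar> / \<delta>" using N n unfolding n'_def by auto
      have wn: "w n = n' * n'" unfolding w_def n'_def power2_eq_square by simp
      have wpos: "w n > 0" using n'1 wn by simp
      define y where "y = x0 + (\<Delta> / w n) *\<^sub>R axis k 1"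
      have x0in: "x0 \<in> \<Omega>" using \<delta> by auto
      have "dist x0 y = \<bar>\<Delta>\<bar> / w n" unfolding y_def dist_norm using wpos by (simp add: norm_axis_1)
      also have "\<dots> \<le> \<bar>\<Delta>\<bar> / n'" unfolding wn using n'1 \<Delta>0
        by (simp add: frac_le mult_le_cancel_left1)
      also have "\<dots> < \<delta>" using n'a(2) n'1 \<delta>(1) by (simp add: divide_less_eq mult.commute)
      finally have yin: "y \<in> \<Omega>" using \<delta> by auto
      have tx0: "t n (vec_to_seq x0) = s0" unfolding t_def v0 b_def by simp
      have ty: "t n (vec_to_seq y) = s1" unfolding t_def v0 b_def y_def \<Delta>_def using wpos
        by (simp add: field_simps)
      have key: "D * n' / \<bar>\<Delta>\<bar> \<le> C'" if C': "C'-lipschitz_on \<Omega> (realize \<rho> S (\<Phi> n))" for C'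
      proof -
        have "dist (realize \<rho> S (\<Phi> n) y) (realize \<rho> S (\<Phi> n) x0) \<le> C' * dist y x0"
          using C' yin x0in unfolding lipschitz_on_def by auto
        moreover have "dist (realize \<rho> S (\<Phi> n) y) (realize \<rho> S (\<Phi> n) x0) = D / n'"
          unfolding real_eq ty tx0 D_def dist_real_def n'_def by (simp add: diff_divide_distrib[symmetric])
        moreover have "dist y x0 = \<bar>\<Delta>\<bar> / (n' * n')" unfolding y_def dist_norm wn using n'1 by (simp add: norm_axis_1 abs_mult)
        ultimately have "D / n' \<le> C' * (\<bar>\<Delta>\<bar> / (n' * n'))" by simp
        then have a: "D / n' * (n' * n') \<le> C' * (\<bar>\<Delta>\<bar> / (n' * n')) * (n' * n')"
          by (rule mult_right_mono) simp
        have b: "D / n' * (n' * n') = D * n'" using n'1 by (simp add: field_simps)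
        have c: "C' * (\<bar>\<Delta>\<bar> / (n' * n')) * (n' * n') = C' * \<bar>\<Delta>\<bar>" using n'1 by simp
        have "D * n' \<le> C' * \<bar>\<Delta>\<bar>" using a unfolding b c .
        then show ?thesis using \<Delta>0 by (simp add: divide_le_eq)
      qed
      have "r < D * n' / \<bar>\<Delta>\<bar>" using n'a(1) D0 \<Delta>0 by (simp add: field_simps)
      then have "ereal r < ereal (D * n' / \<bar>\<Delta>\<bar>)" by simp
      also have "\<dots> \<le> lip_const \<Omega> (realize \<rho> S (\<Phi> n))" by (rule lip_const_ge) (rule key)
      finally show "ereal r < lip_const \<Omega> (realize \<rho> S (\<Phi> n))" .
    qed
  qed
  show ?thesis using NN unif lipinf by blast
qed


theorem theorem4p2:
  fixes \<rho> :: "real \<Rightarrow> real" and S :: "nat list" and \<Omega> :: "(real^'d::finite) set"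
  assumes "\<exists>C. C-lipschitz_on UNIV \<rho>"
    and "\<not> (\<exists>a c. \<forall>t. \<rho> t = a * t + c)"
    and "is_arch S" and "length S \<ge> 3"
    and "S ! 0 = CARD('d)" and "S ! 1 \<ge> 3" and "last S = 1"
    and "bounded \<Omega>" and "interior \<Omega> \<noteq> {}"
  shows "(\<exists>\<Phi> :: nat \<Rightarrow> network. (\<forall>n. \<Phi> n \<in> NN S)
            \<and> uniform_limit \<Omega> (\<lambda>n. realize \<rho> S (\<Phi> n)) (\<lambda>x. 0) sequentially
            \<and> (\<lambda>n. lip_const \<Omega> (realize \<rho> S (\<Phi> n))) \<longlonglongrightarrow> \<infinity>)
       \<and> (\<forall>\<Phi> \<Psi> :: nat \<Rightarrow> network.
            (\<forall>n. \<Phi> n \<in> NN S)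
            \<and> uniform_limit \<Omega> (\<lambda>n. realize \<rho> S (\<Phi> n)) (\<lambda>x. 0) sequentially
            \<and> (\<lambda>n. lip_const \<Omega> (realize \<rho> S (\<Phi> n))) \<longlonglongrightarrow> \<infinity>
            \<and> (\<forall>n. \<Psi> n \<in> NN S)
            \<and> (\<forall>n. \<forall>x\<in>\<Omega>. realize \<rho> S (\<Psi> n) x = realize \<rho> S (\<Phi> n) x)
            \<longrightarrow> filterlim (\<lambda>n. scaling S (\<Psi> n)) at_top sequentially)"
proof -
  obtain C where lip: "C-lipschitz_on UNIV \<rho>" using assms(1) by blast
  have part1: "\<exists>\<Phi> :: nat \<Rightarrow> network. (\<forall>n. \<Phi> n \<in> NN S)
            \<and> uniform_limit \<Omega> (\<lambda>n. realize \<rho> S (\<Phi> n)) (\<lambda>x. 0) sequentially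
            \<and> (\<lambda>n. lip_const \<Omega> (realize \<rho> S (\<Phi> n))) \<longlonglongrightarrow> \<infinity>"
    by (rule construction[OF lip assms(2,3,4,5,6,9)])
  have part2: "filterlim (\<lambda>n. scaling S (\<Psi> n)) at_top sequentially"
    if hyp: "(\<forall>n. \<Phi> n \<in> NN S)
            \<and> uniform_limit \<Omega> (\<lambda>n. realize \<rho> S (\<Phi> n)) (\<lambda>x. 0) sequentially
            \<and> (\<lambda>n. lip_const \<Omega> (realize \<rho> S (\<Phi> n))) \<longlonglongrightarrow> \<infinity>
            \<and> (\<forall>n. \<Psi> n \<in> NN S)
            \<and> (\<forall>n. \<forall>x\<in>\<Omega>. realize \<rho> S (\<Psi> n) x = realize \<rho> S (\<Phi> n) x)"
    for \<Phi> \<Psi> :: "nat \<Rightarrow> network"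
    unfolding filterlim_at_top
  proof
    fix Z :: real
    define B where "B = \<bar>Z\<bar>"
    define K where "K = real (S ! (length S - 2)) * B * (\<Prod>m<length S - 2. C * real (S ! m) * B)"
    have ev: "\<forall>\<^sub>F n in sequentially. ereal K < lip_const \<Omega> (realize \<rho> S (\<Phi> n))"
      using hyp unfolding tendsto_PInfty by blast
    show "\<forall>\<^sub>F n in sequentially. Z \<le> scaling S (\<Psi> n)"
    proof (rule eventually_mono[OF ev])
      fix n assume lt: "ereal K < lip_const \<Omega> (realize \<rho> S (\<Phi> n))"
      show "Z \<le> scaling S (\<Psi> n)"
      proof (rule ccontr)
        assume "\<not> Z \<le> scaling S (\<Psi> n)"
        then have sb: "scaling S (\<Psi> n) \<le> B" unfolding B_def by simp
        have "K-lipschitz_on UNIV (realize \<rho> S (\<Psi> n) :: real^'d \<Rightarrow> real)"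
          unfolding K_def by (rule realize_lip[OF lip]) (use hyp sb assms(4) in auto)
        then have kl: "K-lipschitz_on \<Omega> (realize \<rho> S (\<Psi> n))" by (rule lipschitz_on_subset) simp
        have "K-lipschitz_on \<Omega> (realize \<rho> S (\<Phi> n))"
          using kl hyp unfolding lipschitz_on_def by auto
        then have "lip_const \<Omega> (realize \<rho> S (\<Phi> n)) \<le> ereal K" by (rule lip_const_le)
        then show False using lt by simp
      qed
    qed
  qed
  show ?thesis using part1 part2 by blast
qed

end
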